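(* For all integers $m\ge 1$ and $v\ge 1$, the Gardner–Fisher sum satisfies $$S_{m,v}=\frac{1}{(2v-1)!}\sum_{n=0}^{v-1}\left(\frac{\pi}{m}\right)^{2n}s(v,n)\,\Gamma(2v-2n)\,\zeta(2v-2n)\left(1-\frac{1}{m^{2v-2n}}\right).$$
   Context: The Gardner–Fisher sum is $S_{m,v}=\left(\frac{\pi}{2m}\right)^{2v}\sum_{k=1}^{m-1}\cos^{-2v}\!\left(\frac{k\pi}{2m}\right)=\left(\frac{\pi}{2m}\right)^{2v}\sum_{k=1}^{m-1}\sin^{-2v}\!\left(\frac{k\pi}{2m}\right)$ (empty sum $=0$). For integers $v\ge1$ and $0\le n\le v-1$, $s(v,n)$ denotes the $n$-th elementary symmetric polynomial evaluated at the $v-1$ numbers $1^2,2^2,\dots,(v-1)^2$, i.e. $s(v,n)=\sum_{1\le i_1<\dots<i_n\le v-1} i_1^2i_2^2\cdots i_n^2$, with $s(v,0)=1$. $\zeta$ is the Riemann zeta function. *)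

theory Defs
  imports "HOL-Analysis.Analysis"
begin

text \<open>Riemann zeta function, needed only at real arguments s > 1, where it is
  the convergent Dirichlet series sum over k >= 1 of k powr (-s).\<close>
definition riemann_zeta :: "real \<Rightarrow> real" where
  "riemann_zeta s = (\<Sum>k. 1 / (real (Suc k)) powr s)"

definition gardner_fisher :: "nat \<Rightarrow> nat \<Rightarrow> real" where
  "gardner_fisher m v =
     (pi / (2 * real m)) ^ (2 * v) *
     (\<Sum>k = 1..m - 1. 1 / (cos (real k * pi / (2 * real m))) ^ (2 * v))"

definition esym_sq :: "nat \<Rightarrow> nat \<Rightarrow> real" where
  "esym_sq v n = (\<Sum>I \<in> {I. I \<subseteq> {1..v - 1} \<and> card I = n}. \<Prod>i\<in>I. real i ^ 2)"

end

theory Submission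
  imports Defs "HOL-Complex_Analysis.Complex_Analysis"
begin


definition Aset :: "complex set" where "Aset = UNIV - \<int>"

lemma open_Aset: "open Aset" unfolding Aset_def by (intro open_Diff) auto

lemma Aset_sin: assumes "w \<in> Aset" shows "sin (of_real pi * w) \<noteq> 0"
proof
  assume "sin (of_real pi * w) = 0"
  then obtain n :: int where "of_real pi * w = of_real (n * pi)" by (auto simp: sin_eq_0)
  hence "w = of_int n" by (simp add: field_simps)
  thus False using assms by (auto simp: Aset_def)
qed

lemma Aset_nonpos: assumes "w \<in> Aset" shows "w \<notin> \<int>\<^sub>\<le>\<^sub>0" "1 - w \<notin> \<int>\<^sub>\<le>\<^sub>0" "1 - w \<in> Aset"
proof -
  have "1 - w \<notin> \<int>" using assms Ints_diff[of 1 "1-w"] by (auto simp: Aset_def)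
  thus "w \<notin> \<int>\<^sub>\<le>\<^sub>0" "1 - w \<notin> \<int>\<^sub>\<le>\<^sub>0" "1 - w \<in> Aset" using assms nonpos_Ints_subset_Ints
    by (auto simp: Aset_def)
qed

lemma deriv_zero_on_open:
  fixes f :: "complex \<Rightarrow> complex"
  assumes "(f has_field_derivative D) (at w)" "open S" "w \<in> S" "\<And>x. x \<in> S \<Longrightarrow> f x = c"
  shows "D = 0"
proof -
  have "((\<lambda>x. c) has_field_derivative D) (at w)"
    using has_field_derivative_transform_within_open[OF assms(1,2,3)] assms(4) by auto
  moreover have "((\<lambda>x. c) has_field_derivative 0) (at w)" by simp
  ultimately show ?thesis using DERIV_unique by blast
qed

lemma digamma_refl:
  assumes w: "w \<in> Aset"
  shows "Digamma w - Digamma (1 - w) = - of_real pi * cos (of_real pi * w) / sin (of_real pi * w)"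
proof -
  note nz = Aset_nonpos[OF w] Aset_sin[OF w]
  let ?g = "\<lambda>w. Gamma w * Gamma (1 - w) * sin (of_real pi * w)"
  have "(?g has_field_derivative
     (Gamma w * Digamma w * Gamma (1 - w) * sin (of_real pi * w)
      - Gamma w * (Gamma (1 - w) * Digamma (1 - w)) * sin (of_real pi * w)
      + Gamma w * Gamma (1 - w) * (cos (of_real pi * w) * of_real pi))) (at w)"
    using nz by (auto intro!: derivative_eq_intros simp: algebra_simps)
  moreover have "\<And>x. x \<in> Aset \<Longrightarrow> ?g x = of_real pi"
    using Gamma_reflection_complex Aset_sin by (simp add: field_simps)
  ultimately have 0: "Gamma w * Digamma w * Gamma (1 - w) * sin (of_real pi * w)
      - Gamma w * (Gamma (1 - w) * Digamma (1 - w)) * sin (of_real pi * w)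
      + Gamma w * Gamma (1 - w) * (cos (of_real pi * w) * of_real pi) = 0"
    using deriv_zero_on_open open_Aset w by blast
  have G: "Gamma w * Gamma (1 - w) \<noteq> 0" using nz by (simp add: Gamma_eq_zero_iff)
  from 0 have "Gamma w * Gamma (1 - w) * ((Digamma w - Digamma (1 - w)) * sin (of_real pi * w) + of_real pi * cos (of_real pi * w)) = 0"
    by (simp add: algebra_simps)
  with G have "(Digamma w - Digamma (1 - w)) * sin (of_real pi * w) + of_real pi * cos (of_real pi * w) = 0" by simp
  with nz show ?thesis by (simp add: field_simps)
qed

lemma trigamma_refl:
  assumes w: "w \<in> Aset"
  shows "Polygamma 1 w + Polygamma 1 (1 - w) = of_real pi ^ 2 / sin (of_real pi * w) ^ 2"
proof -
  note nz = Aset_nonpos[OF w] Aset_sin[OF w]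
  let ?h = "\<lambda>w. Digamma w - Digamma (1 - w) + of_real pi * cos (of_real pi * w) / sin (of_real pi * w)"
  have "(?h has_field_derivative
     (Polygamma 1 w + Polygamma 1 (1 - w) +
      of_real pi * ((- sin (of_real pi * w) * of_real pi) * sin (of_real pi * w) - cos (of_real pi * w) * (cos (of_real pi * w) * of_real pi)) / (sin (of_real pi * w))^2)) (at w)"
    using nz by (auto intro!: derivative_eq_intros simp: power2_eq_square algebra_simps)
  moreover have "\<And>x. x \<in> Aset \<Longrightarrow> ?h x = 0"
    using digamma_refl Aset_sin by (simp add: field_simps)
  ultimately have 0: "Polygamma 1 w + Polygamma 1 (1 - w) +
      of_real pi * ((- sin (of_real pi * w) * of_real pi) * sin (of_real pi * w) - cos (of_real pi * w) * (cos (of_real pi * w) * of_real pi)) / (sin (of_real pi * w))^2 = 0"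
    using deriv_zero_on_open open_Aset w by blast
  have "of_real pi * ((- sin (of_real pi * w) * of_real pi) * sin (of_real pi * w) - cos (of_real pi * w) * (cos (of_real pi * w) * of_real pi))
     = - (of_real pi ^ 2 :: complex) * (sin (of_real pi * w) ^2 + cos (of_real pi * w)^2)"
    by (simp only: power2_eq_square) algebra
  also have "\<dots> = - ((of_real pi)^2)" by (subst sin_cos_squared_add) simp
  finally have E: "of_real pi * ((- sin (of_real pi * w) * of_real pi) * sin (of_real pi * w) - cos (of_real pi * w) * (cos (of_real pi * w) * of_real pi)) = - ((of_real pi)^2)" .
  have "Polygamma 1 w + Polygamma 1 (1 - w) + (- ((of_real pi)^2)) / (sin (of_real pi * w))^2 = 0"
    using 0 unfolding E .
  thus ?thesis by (metis add_eq_0_iff minus_divide_left minus_minus)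
qed



definition Fs :: "nat \<Rightarrow> complex \<Rightarrow> complex" where
  "Fs v w = inverse (sin (of_real pi * w) ^ (2 * v))"

lemma pow_inv_aux: "n > 0 \<Longrightarrow> (x::'a::field) \<noteq> 0 \<Longrightarrow> x ^ (n - Suc 0) * inverse (x ^ n) = inverse x"
  by (cases n) (auto simp: field_simps)

lemma dF:
  assumes "w \<in> Aset"
  shows "(Fs v has_field_derivative
     (- (of_nat (2 * v)) * of_real pi * cos (of_real pi * w) * inverse (sin (of_real pi * w) ^ (2 * v + 1)))) (at w)"
proof -
  note s = Aset_sin[OF assms]
  show ?thesis
    unfolding Fs_def[abs_def] using s
    by (auto intro!: derivative_eq_intros simp: pow_inv_aux)
qed

lemma ddF_alg:
  fixes s c S p n :: complex
  assumes "s \<noteq> 0" "S \<noteq> 0" "c^2 = 1 - s^2"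
  shows "s * p * (2 * n * p) * (inverse s * inverse S) -
     (- (inverse s * (c * p) * inverse s * inverse S) - inverse S * (2 * n * (c * p * (S * inverse s))) * inverse S * inverse s) *
     (2 * n * p * c) =
     p^2 * ((2 * n + 4 * (n * n)) * (inverse s * (inverse s * inverse S)) - 4 * n^2 * inverse S)"
  using assms by (simp add: field_simps) algebra

lemma ddF_aux:
  assumes w: "w \<in> Aset"
  shows "((\<lambda>x. - (of_nat (2 * v)) * of_real pi * cos (of_real pi * x) * inverse (sin (of_real pi * x) ^ (2 * v + 1)))
     has_field_derivative
     of_real pi ^ 2 * (of_nat (2 * v * (2 * v + 1)) * Fs (Suc v) w - of_nat ((2 * v)^2) * Fs v w)) (at w)"
proof -
  note s = Aset_sin[OF w]
  have c2: "cos (of_real pi * w)^2 = 1 - sin (of_real pi * w)^2" by (simp add: cos_squared_eq)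
  show ?thesis
  proof (cases "v = 0")
    case True thus ?thesis by (simp add: Fs_def)
  next
    case False
    have pw: "sin (of_real pi * w) ^ (2 * v - Suc 0) = sin (of_real pi * w) ^ (2 * v) * inverse (sin (of_real pi * w))"
      using False s by (cases v) (auto simp: field_simps)
    show ?thesis unfolding Fs_def using s
      apply (auto intro!: derivative_eq_intros)
      apply (subst pw)
      apply (rule ddF_alg)
      using s c2 by auto
  qed
qed
lemma holo_Fs: "Fs v holomorphic_on Aset"
  unfolding Fs_def by (auto intro!: holomorphic_intros dest: Aset_sin)

lemma ddF:
  assumes w: "w \<in> Aset"
  shows "deriv (deriv (Fs v)) w =
     of_real pi ^ 2 * (of_nat (2 * v * (2 * v + 1)) * Fs (Suc v) w - of_nat ((2 * v)^2) * Fs v w)"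
proof -
  define G :: "complex \<Rightarrow> complex" where "G x = - (of_nat (2 * v)) * of_real pi * cos (of_real pi * x) * inverse (sin (of_real pi * x) ^ (2 * v + 1))" for x
  have ev: "eventually (\<lambda>x. x \<in> Aset) (nhds w)" using w open_Aset eventually_nhds_in_open by blast
  have "eventually (\<lambda>x. deriv (Fs v) x = G x) (nhds w)"
    using ev by eventually_elim (simp add: G_def dF[THEN DERIV_imp_deriv])
  hence "deriv (deriv (Fs v)) w = deriv G w" by (intro deriv_cong_ev) auto
  also have "deriv G w = of_real pi ^ 2 * (of_nat (2 * v * (2 * v + 1)) * Fs (Suc v) w - of_nat ((2 * v)^2) * Fs v w)"
    unfolding G_def[abs_def] by (rule DERIV_imp_deriv ddF_aux w)+
  finally show ?thesis .
qed

lemma hF: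
  assumes w: "w \<in> Aset"
  shows "(deriv ^^ (2 * k + 2)) (Fs v) w =
     of_real pi ^ 2 * of_nat (2 * v * (2 * v + 1)) * (deriv ^^ (2 * k)) (Fs (Suc v)) w
     - of_real pi ^ 2 * of_nat ((2 * v)^2) * (deriv ^^ (2 * k)) (Fs v) w"
proof -
  have "(deriv ^^ (2 * k + 2)) (Fs v) w = (deriv ^^ (2 * k)) ((deriv ^^ 2) (Fs v)) w"
    by (subst funpow_add) simp
  also have "\<dots> = (deriv ^^ (2 * k)) (\<lambda>x. of_real pi ^ 2 * of_nat (2 * v * (2 * v + 1)) * Fs (Suc v) x
     - of_real pi ^ 2 * of_nat ((2 * v)^2) * Fs v x) w"
    by (rule higher_deriv_transform_within_open[OF _ _ open_Aset w])
       (auto intro!: holomorphic_intros holomorphic_higher_deriv holo_Fs[THEN holomorphic_on_subset] open_Aset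
             simp: numeral_2_eq_2 ddF algebra_simps)
  also have "\<dots> = of_real pi ^ 2 * of_nat (2 * v * (2 * v + 1)) * (deriv ^^ (2 * k)) (Fs (Suc v)) w
     - of_real pi ^ 2 * of_nat ((2 * v)^2) * (deriv ^^ (2 * k)) (Fs v) w"
    by (subst higher_deriv_diff[OF _ _ open_Aset w])
       (auto intro!: holomorphic_intros holo_Fs simp: higher_deriv_cmult[OF holo_Fs w open_Aset])
  finally show ?thesis .
qed



lemma subsets_insert_split:
  assumes "finite A" "a \<notin> A"
  shows "{I. I \<subseteq> insert a A \<and> card I = Suc n} =
         {I. I \<subseteq> A \<and> card I = Suc n} \<union> insert a ` {I. I \<subseteq> A \<and> card I = n}"
proof (intro equalityI subsetI)
  fix I assume I: "I \<in> {I. I \<subseteq> insert a A \<and> card I = Suc n}"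
  hence fI: "finite I" using assms finite_subset by (metis finite_insert mem_Collect_eq)
  show "I \<in> {I. I \<subseteq> A \<and> card I = Suc n} \<union> insert a ` {I. I \<subseteq> A \<and> card I = n}"
  proof (cases "a \<in> I")
    case True
    have "I = insert a (I - {a})" using True by auto
    moreover have "I - {a} \<subseteq> A" "card (I - {a}) = n" using I True fI by auto
    ultimately show ?thesis by blast
  next
    case False thus ?thesis using I by auto
  qed
next
  fix I assume "I \<in> {I. I \<subseteq> A \<and> card I = Suc n} \<union> insert a ` {I. I \<subseteq> A \<and> card I = n}"
  thus "I \<in> {I. I \<subseteq> insert a A \<and> card I = Suc n}"
  proof
    assume "I \<in> insert a ` {I. I \<subseteq> A \<and> card I = n}"
    then obtain J where J: "J \<subseteq> A" "card J = n" "I = insert a J" by auto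
    have "finite J" using J assms finite_subset by blast
    thus ?thesis using J assms by (auto simp: card_insert_if)
  qed auto
qed

lemma sum_subsets_insert:
  assumes "finite A" "a \<notin> A"
  shows "(\<Sum>I\<in>{I. I \<subseteq> insert a A \<and> card I = Suc n}. g I) =
         (\<Sum>I\<in>{I. I \<subseteq> A \<and> card I = Suc n}. g I) + (\<Sum>I\<in>{I. I \<subseteq> A \<and> card I = n}. g (insert a I))"
proof -
  have fin: "finite {I. I \<subseteq> A \<and> card I = m}" for m
    using assms(1) by (rule finite_subset[rotated, OF finite_Pow_iff[THEN iffD2]]) auto
  have inj: "inj_on (insert a) {I. I \<subseteq> A \<and> card I = n}"
    using assms(2) by (auto simp: inj_on_def insert_ident)
  have disj: "{I. I \<subseteq> A \<and> card I = Suc n} \<inter> insert a ` {I. I \<subseteq> A \<and> card I = n} = {}"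
    using assms(2) by auto
  show ?thesis
    unfolding subsets_insert_split[OF assms]
    by (subst sum.union_disjoint) (use fin disj in \<open>auto simp: sum.reindex[OF inj]\<close>)
qed

lemma esym_sq_0: "esym_sq v 0 = 1"
proof -
  have E: "{I. I \<subseteq> {1..v - 1} \<and> card I = 0} = {{}}"
  proof safe
    fix I x assume "I \<subseteq> {1..v - 1}" "card I = 0" "x \<in> I"
    hence "finite I" by (meson finite_atLeastAtMost finite_subset)
    thus "x \<in> {}" using \<open>card I = 0\<close> \<open>x \<in> I\<close> by simp
  qed auto
  show ?thesis unfolding esym_sq_def E by simp
qed

lemma esym_sq_big: "n > v - 1 \<Longrightarrow> esym_sq v n = 0"
proof -
  assume n: "n > v - 1"
  have E: "{I. I \<subseteq> {1..v - 1} \<and> card I = n} = {}"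
  proof safe
    fix I assume "I \<subseteq> {1..v - 1}" "n = card I"
    hence "card I \<le> v - 1" using card_mono[of "{1..v-1}" I] by auto
    thus "I \<in> {}" using n \<open>n = card I\<close> by simp
  qed
  show ?thesis unfolding esym_sq_def E by simp
qed

lemma esym_sq_Suc:
  "esym_sq (Suc (Suc m)) (Suc n) = esym_sq (Suc m) (Suc n) + real (Suc m) ^ 2 * esym_sq (Suc m) n"
proof -
  have A: "{1..Suc (Suc m) - 1} = insert (Suc m) {1..m}" by auto
  have "esym_sq (Suc (Suc m)) (Suc n) =
     (\<Sum>I\<in>{I. I \<subseteq> {1..m} \<and> card I = Suc n}. \<Prod>i\<in>I. real i ^ 2) +
     (\<Sum>I\<in>{I. I \<subseteq> {1..m} \<and> card I = n}. \<Prod>i\<in>insert (Suc m) I. real i ^ 2)"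
    unfolding esym_sq_def A by (rule sum_subsets_insert) auto
  also have "(\<Sum>I\<in>{I. I \<subseteq> {1..m} \<and> card I = n}. \<Prod>i\<in>insert (Suc m) I. real i ^ 2)
     = (\<Sum>I\<in>{I. I \<subseteq> {1..m} \<and> card I = n}. real (Suc m) ^ 2 * (\<Prod>i\<in>I. real i ^ 2))"
  proof (rule sum.cong)
    fix I assume "I \<in> {I. I \<subseteq> {1..m} \<and> card I = n}"
    hence "finite I" "Suc m \<notin> I" using finite_subset by auto
    thus "(\<Prod>i\<in>insert (Suc m) I. real i ^ 2) = real (Suc m) ^ 2 * (\<Prod>i\<in>I. real i ^ 2)"
      by simp
  qed simp
  finally show ?thesis by (simp add: esym_sq_def sum_distrib_left)
qed



definition Dd :: "nat \<Rightarrow> complex \<Rightarrow> complex" where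
  "Dd j w = (deriv ^^ (2 * j)) (Fs 1) w"

lemma ind:
  assumes w: "w \<in> Aset"
  shows "fact (2 * m + 1) * of_real pi ^ (2 * m) * (deriv ^^ (2 * k)) (Fs (Suc m)) w =
     (\<Sum>n\<le>m. of_real (esym_sq (Suc m) n) * (4 * of_real pi ^ 2) ^ n * Dd (k + m - n) w)"
proof (induction m arbitrary: k)
  case 0
  thus ?case by (simp add: esym_sq_0 Dd_def)
next
  case (Suc m)
  define v where "v = Suc m"
  define q :: complex where "q = 4 * of_real pi ^ 2"
  define e where "e a b = complex_of_real (esym_sq a b)" for a b
  define X where "X a j = (deriv ^^ (2 * j)) (Fs a) w" for a j
  have IH: "fact (2 * m + 1) * of_real pi ^ (2 * m) * X v j = (\<Sum>n\<le>m. e v n * q ^ n * Dd (j + m - n) w)" for j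
    using Suc.IH[of j] by (simp add: v_def q_def e_def X_def)
  have h: "X v (Suc k) = of_real pi ^ 2 * of_nat (2 * v * (2 * v + 1)) * X (Suc v) k - of_real pi ^ 2 * of_nat ((2 * v)^2) * X v k"
    using hF[OF w, of k v] by (simp add: X_def)
  have f: "fact (2 * Suc m + 1) = (fact (2 * m + 1) :: complex) * of_nat (2 * v * (2 * v + 1))"
    by (simp add: v_def fact_Suc algebra_simps)
  have "fact (2 * Suc m + 1) * of_real pi ^ (2 * Suc m) * X (Suc v) k =
     fact (2 * m + 1) * of_real pi ^ (2 * m) * (of_real pi ^ 2 * of_nat (2 * v * (2 * v + 1)) * X (Suc v) k)"
  proof -
    have "(of_real pi :: complex) ^ (2 * Suc m) = of_real pi^(2*m) * of_real pi^2"
      by (simp flip: power_add)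
    thus ?thesis unfolding f by (simp only: mult_ac)
  qed
  also have "\<dots> = fact (2 * m + 1) * of_real pi ^ (2 * m) * X v (Suc k) + of_real pi ^ 2 * of_nat ((2 * v)^2) * (fact (2 * m + 1) * of_real pi ^ (2 * m) * X v k)"
    by (simp add: h algebra_simps)
  also have "\<dots> = (\<Sum>n\<le>m. e v n * q ^ n * Dd (Suc k + m - n) w) + (\<Sum>n\<le>m. of_nat v ^ 2 * e v n * q ^ Suc n * Dd (k + m - n) w)"
    unfolding IH by (simp add: sum_distrib_left q_def algebra_simps)
  also have "(\<Sum>n\<le>m. e v n * q ^ n * Dd (Suc k + m - n) w) = (\<Sum>n\<le>Suc m. e v n * q ^ n * Dd (Suc k + m - n) w)"
    using esym_sq_big[of v "Suc m"] by (simp add: e_def v_def)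
  also have "\<dots> = e v 0 * Dd (Suc k + m) w + (\<Sum>n\<le>m. e v (Suc n) * q ^ Suc n * Dd (k + m - n) w)"
    by (subst sum.atMost_Suc_shift) simp
  also have "e v 0 * Dd (Suc k + m) w + (\<Sum>n\<le>m. e v (Suc n) * q ^ Suc n * Dd (k + m - n) w) +
     (\<Sum>n\<le>m. of_nat v ^ 2 * e v n * q ^ Suc n * Dd (k + m - n) w)
     = e (Suc v) 0 * Dd (k + Suc m) w + (\<Sum>n\<le>m. e (Suc v) (Suc n) * q ^ Suc n * Dd (k + m - n) w)"
    by (simp add: e_def v_def esym_sq_0 esym_sq_Suc sum.distrib algebra_simps)
  also have "\<dots> = (\<Sum>n\<le>Suc m. e (Suc v) n * q ^ n * Dd (k + Suc m - n) w)"
    by (subst sum.atMost_Suc_shift) simp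
  finally show ?case by (simp add: v_def q_def e_def X_def)
qed

lemma Aset_nonpos_Int: "Aset \<inter> \<int>\<^sub>\<le>\<^sub>0 = {}"
  unfolding Aset_def using nonpos_Ints_subset_Ints by auto

lemma Dd_Polygamma:
  assumes w: "w \<in> Aset"
  shows "Dd j w = inverse (of_real pi ^ 2) * (Polygamma (2 * j + 1) w + Polygamma (2 * j + 1) (1 - w))"
proof -
  define P where "P x = inverse (of_real pi ^ 2) * (Polygamma 1 x + Polygamma 1 ((-1) * x + 1))" for x :: complex
  have holP1: "Polygamma 1 holomorphic_on Aset" by (rule holomorphic_on_Polygamma[OF Aset_nonpos_Int])
  have inA: "(-1) * x + 1 \<in> Aset" if "x \<in> Aset" for x using Aset_nonpos(3)[OF that] by simp
  have holP2: "(\<lambda>x. Polygamma 1 ((-1) * x + 1)) holomorphic_on Aset"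
  proof -
    have "(\<lambda>x. (-1) * x + 1) holomorphic_on Aset" by (intro holomorphic_intros)
    moreover have "(\<lambda>x. (-1) * x + 1) ` Aset \<subseteq> Aset" using inA by blast
    ultimately show ?thesis using holomorphic_on_compose_gen[OF _ holP1] unfolding o_def by blast
  qed
  have "Dd j w = (deriv ^^ (2 * j)) P w"
    unfolding Dd_def
  proof (rule higher_deriv_transform_within_open[OF holo_Fs _ open_Aset w])
    show "P holomorphic_on Aset" unfolding P_def by (intro holomorphic_intros holP1 holP2)
    fix x assume x: "x \<in> Aset"
    show "Fs 1 x = P x" unfolding P_def Fs_def using trigamma_refl[OF x] Aset_sin[OF x]
      by (simp add: field_simps power2_eq_square)
  qed
  also have "\<dots> = inverse (of_real pi ^ 2) * ((deriv ^^ (2 * j)) (Polygamma 1) w + (deriv ^^ (2 * j)) (\<lambda>x. Polygamma 1 ((-1) * x + 1)) w)"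
  proof -
    have H: "(\<lambda>x. Polygamma 1 x + Polygamma 1 ((-1) * x + 1)) holomorphic_on Aset"
      by (rule holomorphic_on_add[OF holP1 holP2])
    show ?thesis unfolding P_def[abs_def] higher_deriv_cmult[OF H w open_Aset]
      higher_deriv_add[OF holP1 holP2 open_Aset w] ..
  qed
  also have "(deriv ^^ (2 * j)) (\<lambda>x. Polygamma 1 ((-1) * x + 1)) w = (-1)^(2*j) * (deriv ^^ (2 * j)) (Polygamma 1) ((-1) * w + 1)"
    by (rule higher_deriv_compose_linear'[OF holP1 open_Aset open_Aset w inA])
  also have "(deriv ^^ (2 * j)) (Polygamma 1) ((-1) * w + 1) = Polygamma (2 * j + 1) (1 - w)"
    using higher_deriv_Polygamma[OF Aset_nonpos(2)[OF w], of "2*j" 1] by simp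
  also have "(deriv ^^ (2 * j)) (Polygamma 1) w = Polygamma (2 * j + 1) w"
    using higher_deriv_Polygamma[OF Aset_nonpos(1)[OF w], of "2*j" 1] by simp
  finally show ?thesis by simp
qed



lemma has_sum_finite_UN:
  fixes f :: "'a \<Rightarrow> real"
  assumes "finite K" "disjoint_family_on B K" "\<And>k. k \<in> K \<Longrightarrow> (f has_sum s k) (B k)"
  shows "(f has_sum (\<Sum>k\<in>K. s k)) (\<Union>k\<in>K. B k)"
  using assms
proof (induction K rule: finite_induct)
  case empty thus ?case by simp
next
  case (insert a K)
  have d: "disjoint_family_on B K" using insert.prems(1) by (auto simp: disjoint_family_on_def)
  have IH: "(f has_sum (\<Sum>k\<in>K. s k)) (\<Union>k\<in>K. B k)" using insert.IH[OF d] insert.prems(2) by auto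
  have disj: "B a \<inter> (\<Union>k\<in>K. B k) = {}" using insert.prems(1) insert.hyps(2)
    by (auto simp: disjoint_family_on_def)
  have "(f has_sum (s a + (\<Sum>k\<in>K. s k))) (B a \<union> (\<Union>k\<in>K. B k))"
    by (rule has_sum_Un_disjoint[OF insert.prems(2) IH disj]) auto
  thus ?case using insert.hyps by simp
qed

lemma zeta_has_sum:
  assumes p: "p \<ge> 2"
  shows "((\<lambda>n. inverse (real n ^ p)) has_sum riemann_zeta (real p)) {1..}"
proof -
  have s: "summable (\<lambda>n. inverse (real (Suc n) ^ p))"
    using inverse_power_summable[OF p, where 'a=real] by (subst summable_Suc_iff) simp
  have eq: "(\<lambda>k. 1 / (real (Suc k)) powr real p) = (\<lambda>k. inverse (real (Suc k) ^ p))"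
    by (intro ext) (simp add: powr_realpow divide_inverse del: of_nat_Suc)
  have "(\<lambda>n. inverse (real (Suc n) ^ p)) sums riemann_zeta (real p)"
    unfolding riemann_zeta_def eq using s by (simp add: summable_sums)
  hence "((\<lambda>n. inverse (real (Suc n) ^ p)) has_sum riemann_zeta (real p)) UNIV"
    by (rule sums_nonneg_imp_has_sum) simp
  hence "((\<lambda>n. inverse (real n ^ p)) has_sum riemann_zeta (real p)) (Suc ` UNIV)"
    by (subst has_sum_reindex) (simp_all add: o_def)
  moreover have "Suc ` UNIV = {1..}"
  proof (intro equalityI subsetI)
    fix n :: nat assume "n \<in> {1..}" thus "n \<in> range Suc" by (intro image_eqI[of _ _ "n - 1"]) auto
  qed auto
  ultimately show ?thesis by simp
qed

lemma zeta_nondvd_has_sum: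
  assumes p: "p \<ge> 2" and M: "M \<ge> 1"
  shows "((\<lambda>n. inverse (real n ^ p)) has_sum riemann_zeta (real p) * (1 - 1 / real M ^ p)) {n. n \<ge> 1 \<and> \<not> M dvd n}"
proof -
  have Z: "((\<lambda>n. inverse (real n ^ p)) has_sum riemann_zeta (real p)) {1..}" by (rule zeta_has_sum[OF p])
  have inj: "inj_on (\<lambda>t. M * t) {1..}" using M by (auto simp: inj_on_def)
  have "((\<lambda>t. inverse (real t ^ p) * inverse (real M ^ p)) has_sum riemann_zeta (real p) * inverse (real M ^ p)) {1..}"
    by (rule has_sum_cmult_left[OF Z])
  hence "(((\<lambda>n. inverse (real n ^ p)) \<circ> (\<lambda>t. M * t)) has_sum riemann_zeta (real p) * inverse (real M ^ p)) {1..}"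
    by (simp add: o_def power_mult_distrib mult_ac)
  hence Z2: "((\<lambda>n. inverse (real n ^ p)) has_sum riemann_zeta (real p) * inverse (real M ^ p)) ((\<lambda>t. M * t) ` {1..})"
    by (subst has_sum_reindex[OF inj])
  have im: "(\<lambda>t. M * t) ` {1..} = {n. n \<ge> 1 \<and> M dvd n}"
  proof safe
    fix n assume "n \<ge> 1" "M dvd n"
    then obtain t where "n = M * t" by (auto elim: dvdE)
    with \<open>n \<ge> 1\<close> show "n \<in> (\<lambda>t. M * t) ` {1..}" by (auto intro!: image_eqI[of _ _ t])
  qed (use M in auto)
  have "{n. n \<ge> 1 \<and> \<not> M dvd n} = {1..} - {n. n \<ge> 1 \<and> M dvd n}" by auto
  moreover have "((\<lambda>n. inverse (real n ^ p)) has_sum (riemann_zeta (real p) - riemann_zeta (real p) * inverse (real M ^ p)))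
       ({1..} - {n. n \<ge> 1 \<and> M dvd n})"
    by (rule has_sum_Diff[OF Z Z2[unfolded im]]) auto
  ultimately show ?thesis by (simp add: algebra_simps divide_inverse)
qed

lemma range_lin_mod:
  fixes N k :: nat
  assumes "k < N"
  shows "range (\<lambda>i. k + N * i) = {n. n mod N = k}"
proof (intro equalityI subsetI)
  fix n assume "n \<in> {n. n mod N = k}"
  hence "n = k + N * (n div N)" using mod_mult_div_eq[of n N] by simp
  thus "n \<in> range (\<lambda>i. k + N * i)" by (intro image_eqI[of _ _ "n div N"]) auto
qed (use assms in auto)

lemma nondvd_partition:
  fixes M :: nat
  assumes M: "M \<ge> 1"
  shows "{n. n \<ge> 1 \<and> \<not> M dvd n} =
     (\<Union>k\<in>{1..M-1}. {n. n mod (2*M) = k} \<union> {n. n mod (2*M) = 2*M - k})"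
proof -
  have key: "M dvd n \<longleftrightarrow> n mod (2*M) = 0 \<or> n mod (2*M) = M" for n
  proof -
    have "M dvd n \<longleftrightarrow> M dvd (n mod (2*M))"
      using mod_mod_cancel[of M "2*M" n] by (simp add: dvd_eq_mod_eq_0)
    also have "\<dots> \<longleftrightarrow> n mod (2*M) = 0 \<or> n mod (2*M) = M"
    proof
      assume "M dvd n mod (2*M)"
      then obtain t where t: "n mod (2*M) = M * t" by (auto elim: dvdE)
      have "n mod (2*M) < 2 * M" using M by simp
      hence "t < 2" using t by (metis mult.commute mult_less_cancel2)
      hence "t = 0 \<or> t = 1" by auto
      thus "n mod (2*M) = 0 \<or> n mod (2*M) = M" using t by auto
    qed auto
    finally show ?thesis .
  qed
  show ?thesis
  proof (intro equalityI subsetI)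
    fix n assume "n \<in> {n. n \<ge> 1 \<and> \<not> M dvd n}"
    hence r: "n mod (2*M) \<noteq> 0" "n mod (2*M) \<noteq> M" using key by auto
    have lt: "n mod (2*M) < 2*M" using M by simp
    show "n \<in> (\<Union>k\<in>{1..M-1}. {n. n mod (2*M) = k} \<union> {n. n mod (2*M) = 2*M - k})"
    proof (cases "n mod (2*M) < M")
      case True thus ?thesis using r by (auto intro!: bexI[of _ "n mod (2*M)"])
    next
      case False thus ?thesis using r lt by (auto intro!: bexI[of _ "2*M - n mod (2*M)"])
    qed
  next
    fix n assume "n \<in> (\<Union>k\<in>{1..M-1}. {n. n mod (2*M) = k} \<union> {n. n mod (2*M) = 2*M - k})"
    then obtain k where k: "k \<in> {1..M-1}" "n mod (2*M) = k \<or> n mod (2*M) = 2*M - k" by auto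
    hence "n mod (2*M) \<noteq> 0" "n mod (2*M) \<noteq> M" by auto
    hence "\<not> M dvd n" using key by auto
    moreover have "n \<noteq> 0" using \<open>n mod (2*M) \<noteq> 0\<close> by (metis mod_0)
    ultimately show "n \<in> {n. n \<ge> 1 \<and> \<not> M dvd n}" by auto
  qed
qed

lemma nondvd_disjoint:
  fixes M :: nat
  assumes M: "M \<ge> 1"
  shows "disjoint_family_on (\<lambda>k. {n. n mod (2*M) = k} \<union> {n. n mod (2*M) = 2*M - k}) {1..M-1}"
  unfolding disjoint_family_on_def
proof (intro ballI impI)
  fix a b assume a: "a \<in> {1..M-1}" and b: "b \<in> {1..M-1}" and ab: "a \<noteq> b"
  show "({n. n mod (2*M) = a} \<union> {n. n mod (2*M) = 2*M - a}) \<inter> ({n. n mod (2*M) = b} \<union> {n. n mod (2*M) = 2*M - b}) = {}"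
    using a b ab by auto
qed




lemma polygamma_has_sum:
  fixes N k j :: nat
  assumes k: "0 < k" "k < N"
  shows "((\<lambda>n. inverse (real n ^ (2*j+2))) has_sum
     (Polygamma (2*j+1) (real k / real N) / (fact (2*j+1) * real N ^ (2*j+2)))) {n. n mod N = k}"
proof -
  define x where "x = real k / real N"
  have x0: "x \<noteq> 0" using k by (simp add: x_def)
  have N0: "real N > 0" using k by simp
  have "(\<lambda>i. inverse ((x + of_nat i) ^ Suc (2*j+1))) sums ((-1) ^ Suc (2*j+1) * Polygamma (2*j+1) x / fact (2*j+1))"
    by (rule Polygamma_LIMSEQ[OF x0]) simp
  hence "(\<lambda>i. inverse ((x + of_nat i) ^ (2*j+2))) sums (Polygamma (2*j+1) x / fact (2*j+1))"
    by simp
  hence "(\<lambda>i. inverse ((x + of_nat i) ^ (2*j+2)) * inverse (real N ^ (2*j+2))) sums (Polygamma (2*j+1) x / fact (2*j+1) * inverse (real N ^ (2*j+2)))"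
    by (rule sums_mult2)
  moreover have "inverse ((x + of_nat i) ^ (2*j+2)) * inverse (real N ^ (2*j+2)) = inverse (real (k + N * i) ^ (2*j+2))" for i
  proof -
    have "(x + of_nat i) * real N = real (k + N * i)" using N0 by (simp add: x_def field_simps)
    hence "((x + of_nat i) * real N) ^ (2*j+2) = real (k + N * i) ^ (2*j+2)" by simp
    moreover have "inverse ((x + of_nat i) ^ (2*j+2)) * inverse (real N ^ (2*j+2)) = inverse (((x + of_nat i) * real N) ^ (2*j+2))"
      by (simp only: power_mult_distrib inverse_mult_distrib)
    ultimately show ?thesis by simp
  qed
  ultimately have "(\<lambda>i. inverse (real (k + N * i) ^ (2*j+2))) sums (Polygamma (2*j+1) x / (fact (2*j+1) * real N ^ (2*j+2)))"
    by (simp add: divide_inverse mult_ac)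
  hence "((\<lambda>i. inverse (real (k + N * i) ^ (2*j+2))) has_sum (Polygamma (2*j+1) x / (fact (2*j+1) * real N ^ (2*j+2)))) UNIV"
    by (rule sums_nonneg_imp_has_sum) simp
  hence "((\<lambda>n. inverse (real n ^ (2*j+2))) has_sum (Polygamma (2*j+1) x / (fact (2*j+1) * real N ^ (2*j+2)))) (range (\<lambda>i. k + N * i))"
    by (subst has_sum_reindex) (use k in \<open>auto simp: inj_on_def o_def\<close>)
  thus ?thesis using range_lin_mod[OF k(2)] by (simp add: x_def)
qed

lemma series_main:
  fixes M j :: nat
  assumes M: "M \<ge> 1"
  shows "(\<Sum>k\<in>{1..M-1}. Polygamma (2*j+1) (real k / real (2*M)) + Polygamma (2*j+1) (1 - real k / real (2*M)))
     = fact (2*j+1) * real (2*M) ^ (2*j+2) * (riemann_zeta (real (2*j+2)) * (1 - 1 / real M ^ (2*j+2)))"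
proof -
  define c :: real where "c = fact (2*j+1) * real (2*M) ^ (2*j+2)"
  have c0: "c > 0" using M by (simp add: c_def)
  define s where "s k = (Polygamma (2*j+1) (real k / real (2*M)) + Polygamma (2*j+1) (1 - real k / real (2*M))) / c" for k
  have hs: "((\<lambda>n. inverse (real n ^ (2*j+2))) has_sum s k) ({n. n mod (2*M) = k} \<union> {n. n mod (2*M) = 2*M - k})"
    if k: "k \<in> {1..M-1}" for k
  proof -
    have kk: "0 < k" "k < 2*M" "0 < 2*M - k" "2*M - k < 2*M" using k M by auto
    have 1: "((\<lambda>n. inverse (real n ^ (2*j+2))) has_sum (Polygamma (2*j+1) (real k / real (2*M)) / c)) {n. n mod (2*M) = k}"
      using polygamma_has_sum[OF kk(1,2), of j] by (simp add: c_def)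
    have 2: "((\<lambda>n. inverse (real n ^ (2*j+2))) has_sum (Polygamma (2*j+1) (real (2*M - k) / real (2*M)) / c)) {n. n mod (2*M) = 2*M - k}"
      using polygamma_has_sum[OF kk(3,4), of j] by (simp add: c_def)
    have e: "real (2*M - k) / real (2*M) = 1 - real k / real (2*M)" using kk M by (simp add: of_nat_diff[of k "2*M"] field_simps)
    have "((\<lambda>n. inverse (real n ^ (2*j+2))) has_sum (Polygamma (2*j+1) (real k / real (2*M)) / c + Polygamma (2*j+1) (real (2*M - k) / real (2*M)) / c))
        ({n. n mod (2*M) = k} \<union> {n. n mod (2*M) = 2*M - k})"
      by (rule has_sum_Un_disjoint[OF 1 2]) (use k in auto)
    thus ?thesis unfolding e s_def by (simp add: add_divide_distrib)
  qed
  have "((\<lambda>n. inverse (real n ^ (2*j+2))) has_sum (\<Sum>k\<in>{1..M-1}. s k))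
          (\<Union>k\<in>{1..M-1}. {n. n mod (2*M) = k} \<union> {n. n mod (2*M) = 2*M - k})"
    by (rule has_sum_finite_UN[OF _ nondvd_disjoint[OF M] hs]) auto
  hence "((\<lambda>n. inverse (real n ^ (2*j+2))) has_sum (\<Sum>k\<in>{1..M-1}. s k)) {n. n \<ge> 1 \<and> \<not> M dvd n}"
    unfolding nondvd_partition[OF M] .
  moreover have "((\<lambda>n. inverse (real n ^ (2*j+2))) has_sum riemann_zeta (real (2*j+2)) * (1 - 1 / real M ^ (2*j+2))) {n. n \<ge> 1 \<and> \<not> M dvd n}"
    using zeta_nondvd_has_sum[of "2*j+2" M] M by simp
  ultimately have "(\<Sum>k\<in>{1..M-1}. s k) = riemann_zeta (real (2*j+2)) * (1 - 1 / real M ^ (2*j+2))"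
    using has_sum_unique by blast
  moreover have "(\<Sum>k\<in>{1..M-1}. s k) = (\<Sum>k\<in>{1..M-1}. Polygamma (2*j+1) (real k / real (2*M)) + Polygamma (2*j+1) (1 - real k / real (2*M))) / c"
    unfolding s_def by (rule sum_divide_distrib[symmetric])
  ultimately have "(\<Sum>k\<in>{1..M-1}. Polygamma (2*j+1) (real k / real (2*M)) + Polygamma (2*j+1) (1 - real k / real (2*M))) / c = riemann_zeta (real (2*j+2)) * (1 - 1 / real M ^ (2*j+2))"
    by simp
  hence "(\<Sum>k\<in>{1..M-1}. Polygamma (2*j+1) (real k / real (2*M)) + Polygamma (2*j+1) (1 - real k / real (2*M))) = c * (riemann_zeta (real (2*j+2)) * (1 - 1 / real M ^ (2*j+2)))"
    using c0 by (simp add: divide_eq_eq mult.commute)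
  thus ?thesis unfolding c_def .
qed



lemma rexp:
  fixes x :: real and r :: nat
  assumes x: "0 < x" "x < 1"
  shows "fact (2 * r+1) * pi ^ (2 * r) * inverse (sin (pi * x) ^ (2 * Suc r)) =
    (\<Sum>n\<le>r. esym_sq (Suc r) n * (4 * pi ^ 2) ^ n * (inverse (pi ^ 2) *
        (Polygamma (2 * (r - n) + 1) x + Polygamma (2 * (r - n) + 1) (1 - x))))"
proof -
  define w where "w = complex_of_real x"
  have xI: "x \<notin> \<int>"
  proof
    assume "x \<in> \<int>" then obtain n where "x = of_int n" by (auto elim: Ints_cases)
    with x show False by auto
  qed
  have w: "w \<in> Aset" using xI by (simp add: Aset_def w_def)
  have x0: "x \<noteq> 0" "1 - x \<noteq> 0" using x by auto
  have pg1: "Polygamma n (1 - w) = complex_of_real (Polygamma n (1 - x))" for n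
  proof -
    have "1 - w = complex_of_real (1 - x)" by (simp add: w_def)
    thus ?thesis by (simp only: Polygamma_of_real[OF x0(2)])
  qed
  have pg0: "Polygamma n w = complex_of_real (Polygamma n x)" for n
    unfolding w_def by (rule Polygamma_of_real[OF x0(1)])
  have "fact (2 * r + 1) * of_real pi ^ (2 * r) * (deriv ^^ (2 * 0)) (Fs (Suc r)) w =
     (\<Sum>n\<le>r. of_real (esym_sq (Suc r) n) * (4 * of_real pi ^ 2) ^ n * Dd (0 + r - n) w)"
    by (rule ind[OF w])
  also have "\<dots> = (\<Sum>n\<le>r. of_real (esym_sq (Suc r) n) * (4 * of_real pi ^ 2) ^ n *
      (inverse (of_real pi ^ 2) * (Polygamma (2 * (r - n) + 1) w + Polygamma (2 * (r - n) + 1) (1 - w))))"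
    by (simp add: Dd_Polygamma[OF w])
  also have "\<dots> = of_real (\<Sum>n\<le>r. esym_sq (Suc r) n * (4 * pi ^ 2) ^ n * (inverse (pi ^ 2) *
        (Polygamma (2 * (r - n) + 1) x + Polygamma (2 * (r - n) + 1) (1 - x))))"
    by (simp add: pg0 pg1)
  finally have "of_real (fact (2 * r+1) * pi ^ (2 * r) * inverse (sin (pi * x) ^ (2 * Suc r))) =
     (of_real (\<Sum>n\<le>r. esym_sq (Suc r) n * (4 * pi ^ 2) ^ n * (inverse (pi ^ 2) *
        (Polygamma (2 * (r - n) + 1) x + Polygamma (2 * (r - n) + 1) (1 - x)))) :: complex)"
    by (simp add: Fs_def w_def flip: sin_of_real)
  thus ?thesis by (simp only: of_real_eq_iff)
qed



lemma coeff_alg: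
  fixes m :: real and n t :: nat
  assumes "m > 0"
  shows "(pi / (2 * m)) ^ (2 * (n + t) + 2) / pi ^ (2 * (n + t)) * ((4 * pi ^ 2) ^ n * inverse (pi ^ 2)) * (2 * m) ^ (2 * t + 2)
     = (pi / m) ^ (2 * n)"
proof -
  define A B C D where "A = pi ^ (2 * n)" "B = pi ^ (2 * t)" "C = m ^ (2 * n)" "D = (2 * m) ^ (2 * t + 2)"
  have nz: "A \<noteq> 0" "B \<noteq> 0" "C \<noteq> 0" "D \<noteq> 0" "pi ^ 2 \<noteq> 0" using assms by (auto simp: A_B_C_D_def)
  have f4: "(2::real)^n * 2^n = 4^n" by (simp flip: power_mult_distrib)
  have 1: "(pi / (2 * m)) ^ (2 * (n + t) + 2) = A * B * pi ^ 2 / (4 ^ n * C * D)"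
    unfolding A_B_C_D_def by (simp add: power_divide power_add power_mult_distrib power_mult power2_eq_square mult_ac f4)
  have 2: "pi ^ (2 * (n + t)) = A * B" unfolding A_B_C_D_def by (simp add: power_add)
  have 3: "(4 * pi ^ 2) ^ n = 4 ^ n * A" unfolding A_B_C_D_def by (simp add: power_mult_distrib power_mult)
  have 4: "(pi / m) ^ (2 * n) = A / C" unfolding A_B_C_D_def by (simp add: power_divide)
  show ?thesis unfolding 1 2 3 4 A_B_C_D_def(4)[symmetric] using nz by (simp add: field_simps)
qed

theorem mainTheorem3:
  fixes m v :: nat
  assumes "m \<ge> 1" and "v \<ge> 1"
  shows "gardner_fisher m v =
    1 / fact (2 * v - 1) *
    (\<Sum>n = 0..v - 1. (pi / real m) ^ (2 * n) * esym_sq v n *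
        Gamma (real (2 * v - 2 * n)) * riemann_zeta (real (2 * v - 2 * n)) *
        (1 - 1 / real m ^ (2 * v - 2 * n)))"
proof -
  obtain r where v: "v = Suc r" using assms(2) by (cases v) auto
  have m0: "real m > 0" using assms(1) by simp
  define PS where "PS n k = Polygamma (2 * (r - n) + 1) (real k / real (2 * m)) + Polygamma (2 * (r - n) + 1) (1 - real k / real (2 * m))" for n k
  have G1: "(\<Sum>k = 1..m - 1. 1 / (cos (real k * pi / (2 * real m))) ^ (2 * v)) =
            (\<Sum>k = 1..m - 1. inverse (sin (pi * (real k / real (2 * m))) ^ (2 * Suc r)))"
  proof (rule sum.reindex_bij_witness[of _ "\<lambda>j. m - j" "\<lambda>j. m - j"])
    fix j assume j: "j \<in> {1..m - 1}"
    have "pi * (real (m - j) / real (2 * m)) = pi / 2 - real j * pi / (2 * real m)"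
    proof -
      have "j \<le> m" using j by (simp only: atLeastAtMost_iff) linarith
      hence "real (m - j) = real m - real j" by (rule of_nat_diff)
      thus ?thesis using m0 by (simp add: field_simps)
    qed
    hence "sin (pi * (real (m - j) / real (2 * m))) = cos (real j * pi / (2 * real m))"
      by (simp add: sin_diff)
    thus "inverse (sin (pi * (real (m - j) / real (2 * m))) ^ (2 * Suc r)) = 1 / (cos (real j * pi / (2 * real m))) ^ (2 * v)"
      by (simp only: v divide_inverse mult_1_left)
  qed auto
  define F :: real where "F = fact (2 * r + 1)"
  define P :: real where "P = pi ^ (2 * r)"
  define X :: real where "X = (pi / (2 * real m)) ^ (2 * v)"
  define c where "c n = esym_sq (Suc r) n * (4 * pi ^ 2) ^ n * inverse (pi ^ 2)" for n
  define Zr where "Zr n = riemann_zeta (real (2 * (r - n) + 2)) * (1 - 1 / real m ^ (2 * (r - n) + 2))" for n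
  have F0: "F > 0" unfolding F_def by simp
  have P0: "P > 0" unfolding P_def by simp
  have G2: "inverse (sin (pi * (real k / real (2 * m))) ^ (2 * Suc r)) = (\<Sum>n\<le>r. c n * PS n k) / (F * P)"
    if k: "k \<in> {1..m - 1}" for k
  proof -
    have x: "0 < real k / real (2 * m)" "real k / real (2 * m) < 1" using k m0 by (auto simp: field_simps)
    have "F * P * inverse (sin (pi * (real k / real (2 * m))) ^ (2 * Suc r)) = (\<Sum>n\<le>r. c n * PS n k)"
      unfolding F_def P_def c_def PS_def using rexp[OF x, of r] by (simp add: mult_ac)
    thus ?thesis using F0 P0 by (simp add: field_simps)
  qed
  have "gardner_fisher m v = X * (\<Sum>k = 1..m - 1. inverse (sin (pi * (real k / real (2 * m))) ^ (2 * Suc r)))"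
    unfolding gardner_fisher_def G1 X_def by (rule refl)
  also have "\<dots> = X * (\<Sum>k = 1..m - 1. (\<Sum>n\<le>r. c n * PS n k) / (F * P))"
    by (intro arg_cong[where f="(*) X"] sum.cong refl G2)
  also have "\<dots> = X / (F * P) * (\<Sum>n\<le>r. c n * (\<Sum>k = 1..m - 1. PS n k))"
  proof -
    have sw: "(\<Sum>k = 1..m - 1. \<Sum>n\<le>r. c n * PS n k) = (\<Sum>n\<le>r. c n * (\<Sum>k = 1..m - 1. PS n k))"
      by (subst sum.swap) (simp add: sum_distrib_left)
    show ?thesis unfolding sum_divide_distrib[symmetric] sw by simp
  qed
  also have "\<dots> = X / (F * P) * (\<Sum>n\<le>r. c n * (fact (2 * (r - n) + 1) * real (2 * m) ^ (2 * (r - n) + 2) * Zr n))"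
    unfolding PS_def Zr_def using series_main[OF assms(1)] by simp
  also have "\<dots> = 1 / F * (\<Sum>n\<le>r. X / P * (c n * (fact (2 * (r - n) + 1) * real (2 * m) ^ (2 * (r - n) + 2) * Zr n)))"
    by (simp add: sum_distrib_left[symmetric] divide_inverse mult_ac)
  also have "(\<Sum>n\<le>r. X / P * (c n * (fact (2 * (r - n) + 1) * real (2 * m) ^ (2 * (r - n) + 2) * Zr n))) =
     (\<Sum>n = 0..v - 1. (pi / real m) ^ (2 * n) * esym_sq v n *
        Gamma (real (2 * v - 2 * n)) * riemann_zeta (real (2 * v - 2 * n)) *
        (1 - 1 / real m ^ (2 * v - 2 * n)))"
    unfolding v diff_Suc_1 atLeast0AtMost
  proof (rule sum.cong[OF refl])
    fix n assume "n \<in> {..r}"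
    then obtain t where t: "r = n + t" by (metis atMost_iff le_add_diff_inverse)
    have e1: "r - n = t" "2 * Suc r - 2 * n = 2 * t + 2" using t by auto
    have gam: "Gamma (real (2 * t + 2)) = fact (2 * t + 1)"
    proof -
      have "real (2 * t + 2) = 1 + real (2 * t + 1)" by simp
      thus ?thesis using Gamma_fact[of "2 * t + 1", where 'a=real] by simp
    qed
    have co: "X / P * ((4 * pi ^ 2) ^ n * inverse (pi ^ 2)) * real (2 * m) ^ (2 * t + 2) = (pi / real m) ^ (2 * n)"
      unfolding X_def P_def v t using coeff_alg[OF m0, of n t] by simp
    have "X / P * (c n * (fact (2 * (r - n) + 1) * real (2 * m) ^ (2 * (r - n) + 2) * Zr n)) =
       (X / P * ((4 * pi ^ 2) ^ n * inverse (pi ^ 2)) * real (2 * m) ^ (2 * t + 2)) * (esym_sq (Suc r) n * fact (2 * t + 1) * Zr n)"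
      unfolding c_def e1 by (simp add: mult_ac)
    also have "\<dots> = (pi / real m) ^ (2 * n) * esym_sq (Suc r) n * Gamma (real (2 * Suc r - 2 * n)) *
       riemann_zeta (real (2 * Suc r - 2 * n)) * (1 - 1 / real m ^ (2 * Suc r - 2 * n))"
      unfolding co e1 gam Zr_def by (simp add: mult_ac)
    finally show "X / P * (c n * (fact (2 * (r - n) + 1) * real (2 * m) ^ (2 * (r - n) + 2) * Zr n)) =
       (pi / real m) ^ (2 * n) * esym_sq (Suc r) n * Gamma (real (2 * Suc r - 2 * n)) *
       riemann_zeta (real (2 * Suc r - 2 * n)) * (1 - 1 / real m ^ (2 * Suc r - 2 * n))" .
  qed
  finally have R: "gardner_fisher m v = 1 / F * (\<Sum>n = 0..v - 1. (pi / real m) ^ (2 * n) * esym_sq v n *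
        Gamma (real (2 * v - 2 * n)) * riemann_zeta (real (2 * v - 2 * n)) *
        (1 - 1 / real m ^ (2 * v - 2 * n)))" .
  have "F = fact (2 * v - 1)" unfolding F_def v by simp
  with R show ?thesis by simp
qed

end
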